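(* Let $\mathcal H$ be a graded connected Hopf algebra over a field $\Bbbk$ and let $\varphi,\varphi',\psi,\psi'$ be characters on $\mathcal H$. Suppose that either $\psi^{-1}\varphi=(\psi')^{-1}\varphi'$ or $\varphi\psi^{-1}=\varphi'(\psi')^{-1}$. Then $S(\varphi,\psi)=S(\varphi',\psi')$ and $I(\varphi,\psi)=I(\varphi',\psi')$.
   Context: $\mathcal H=\bigoplus_{n\ge0}\mathcal H_n$ is graded connected with finite-dimensional components; characters are algebra morphisms to $\Bbbk$, multiplied by convolution $\varphi\psi=m_\Bbbk\circ(\varphi\otimes\psi)\circ\Delta$, with inverse $\varphi^{-1}=\varphi\circ S$. For a linear functional $\varphi$, $\varphi_n=\varphi|_{\mathcal H_n}$. $S(\varphi,\psi)$ is the largest graded subcoalgebra of $\mathcal H$ on which $\varphi=\psi$; $I(\varphi,\psi)$ is the ideal of the graded dual $\mathcal H^*=\bigoplus_n(\mathcal H_n)^*$ generated by $\varphi_n-\psi_n$, $n\ge0$. *)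

theory Defs
  imports Complex_Main
begin

text \<open>
  The coproduct is given in Sweedler form: cop x is a
  finite list of pairs (a_i, b_i) representing the tensor sum_i a_i (x) b_i.
  Two such lists represent the same tensor iff all functionals f (x) g
  (f, g linear) agree on them (pure tensors of functionals separate points of
  a tensor product of vector spaces).
\<close>

record ('k, 'h) hopf =
  scl :: "'k \<Rightarrow> 'h \<Rightarrow> 'h"
  mul :: "'h \<Rightarrow> 'h \<Rightarrow> 'h"
  one :: "'h"
  cop :: "'h \<Rightarrow> ('h \<times> 'h) list"
  cou :: "'h \<Rightarrow> 'k"
  ant :: "'h \<Rightarrow> 'h"
  grd :: "nat \<Rightarrow> 'h set"

definition lin_fun :: "('k::field, 'h::ab_group_add) hopf \<Rightarrow> ('h \<Rightarrow> 'k) \<Rightarrow> bool" where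
  "lin_fun HA f \<longleftrightarrow> (\<forall>x y. f (x + y) = f x + f y) \<and> (\<forall>c x. f (scl HA c x) = c * f x)"

definition teval :: "('h \<Rightarrow> 'k::field) \<Rightarrow> ('h \<Rightarrow> 'k) \<Rightarrow> ('h \<times> 'h) list \<Rightarrow> 'k" where
  "teval f g xs = (\<Sum>(a, b)\<leftarrow>xs. f a * g b)"

definition teq :: "('k::field, 'h::ab_group_add) hopf \<Rightarrow> ('h \<times> 'h) list \<Rightarrow> ('h \<times> 'h) list \<Rightarrow> bool" where
  "teq HA xs ys \<longleftrightarrow> (\<forall>f g. lin_fun HA f \<longrightarrow> lin_fun HA g \<longrightarrow> teval f g xs = teval f g ys)"

definition graded_connected_hopf :: "('k::field, 'h::ab_group_add) hopf \<Rightarrow> bool" where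
  "graded_connected_hopf HA \<longleftrightarrow>
     \<comment> \<open>vector space\<close>
     vector_space (scl HA)
     \<comment> \<open>associative unital algebra\<close>
   \<and> (\<forall>x y z. mul HA (x + y) z = mul HA x z + mul HA y z)
   \<and> (\<forall>x y z. mul HA x (y + z) = mul HA x y + mul HA x z)
   \<and> (\<forall>c x y. mul HA (scl HA c x) y = scl HA c (mul HA x y))
   \<and> (\<forall>c x y. mul HA x (scl HA c y) = scl HA c (mul HA x y))
   \<and> (\<forall>x y z. mul HA (mul HA x y) z = mul HA x (mul HA y z))
   \<and> (\<forall>x. mul HA (one HA) x = x \<and> mul HA x (one HA) = x)
     \<comment> \<open>coassociative counital coalgebra\<close>
   \<and> (\<forall>x y. teq HA (cop HA (x + y)) (cop HA x @ cop HA y))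
   \<and> (\<forall>c x. teq HA (cop HA (scl HA c x)) (map (\<lambda>(a, b). (scl HA c a, b)) (cop HA x)))
   \<and> (\<forall>x f g h. lin_fun HA f \<longrightarrow> lin_fun HA g \<longrightarrow> lin_fun HA h \<longrightarrow>
        (\<Sum>(a, b)\<leftarrow>cop HA x. teval f g (cop HA a) * h b)
      = (\<Sum>(a, b)\<leftarrow>cop HA x. f a * teval g h (cop HA b)))
   \<and> lin_fun HA (cou HA)
   \<and> (\<forall>x. (\<Sum>(a, b)\<leftarrow>cop HA x. scl HA (cou HA a) b) = x)
   \<and> (\<forall>x. (\<Sum>(a, b)\<leftarrow>cop HA x. scl HA (cou HA b) a) = x)
     \<comment> \<open>bialgebra compatibility\<close>
   \<and> (\<forall>x y. teq HA (cop HA (mul HA x y))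
        (concat (map (\<lambda>(a, b). map (\<lambda>(c, d). (mul HA a c, mul HA b d)) (cop HA y)) (cop HA x))))
   \<and> teq HA (cop HA (one HA)) [(one HA, one HA)]
   \<and> (\<forall>x y. cou HA (mul HA x y) = cou HA x * cou HA y)
   \<and> cou HA (one HA) = 1
     \<comment> \<open>antipode\<close>
   \<and> (\<forall>x y. ant HA (x + y) = ant HA x + ant HA y)
   \<and> (\<forall>c x. ant HA (scl HA c x) = scl HA c (ant HA x))
   \<and> (\<forall>x. (\<Sum>(a, b)\<leftarrow>cop HA x. mul HA (ant HA a) b) = scl HA (cou HA x) (one HA))
   \<and> (\<forall>x. (\<Sum>(a, b)\<leftarrow>cop HA x. mul HA a (ant HA b)) = scl HA (cou HA x) (one HA))
     \<comment> \<open>grading: H = direct sum of finite-dimensional subspaces H_n\<close>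
   \<and> (\<forall>n. module.subspace (scl HA) (grd HA n))
   \<and> (\<forall>n. \<exists>B. finite B \<and> grd HA n = module.span (scl HA) B)
   \<and> (\<forall>x. \<exists>xs N. (\<forall>m. xs m \<in> grd HA m) \<and> x = (\<Sum>m<N. xs m))
   \<and> (\<forall>xs N. (\<forall>m. xs m \<in> grd HA m) \<longrightarrow> (\<Sum>m<N. xs m) = 0 \<longrightarrow> (\<forall>m<N. xs m = 0))
     \<comment> \<open>graded algebra and graded coalgebra\<close>
   \<and> (\<forall>i j x y. x \<in> grd HA i \<longrightarrow> y \<in> grd HA j \<longrightarrow> mul HA x y \<in> grd HA (i + j))
   \<and> one HA \<in> grd HA 0
   \<and> (\<forall>n x. x \<in> grd HA n \<longrightarrow> (\<exists>ys. teq HA (cop HA x) ys \<and>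
          (\<forall>(a, b)\<in>set ys. \<exists>i j. i + j = n \<and> a \<in> grd HA i \<and> b \<in> grd HA j)))
   \<and> (\<forall>n x. 0 < n \<longrightarrow> x \<in> grd HA n \<longrightarrow> cou HA x = 0)
     \<comment> \<open>connected\<close>
   \<and> grd HA 0 = module.span (scl HA) {one HA}"

definition hproj :: "('k::field, 'h::ab_group_add) hopf \<Rightarrow> nat \<Rightarrow> 'h \<Rightarrow> 'h" where
  "hproj HA n x = (THE y. \<exists>xs N. (\<forall>m. xs m \<in> grd HA m) \<and> (\<forall>m\<ge>N. xs m = 0)
                         \<and> x = (\<Sum>m<N. xs m) \<and> y = xs n)"

text \<open>phi_n = phi restricted to H_n, extended by zero to the other components.\<close>
definition comp :: "('k::field, 'h::ab_group_add) hopf \<Rightarrow> ('h \<Rightarrow> 'k) \<Rightarrow> nat \<Rightarrow> 'h \<Rightarrow> 'k" where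
  "comp HA f n = (\<lambda>x. f (hproj HA n x))"

definition conv :: "('k::field, 'h::ab_group_add) hopf \<Rightarrow> ('h \<Rightarrow> 'k) \<Rightarrow> ('h \<Rightarrow> 'k) \<Rightarrow> 'h \<Rightarrow> 'k" where
  "conv HA f g = (\<lambda>x. \<Sum>(a, b)\<leftarrow>cop HA x. f a * g b)"

definition character :: "('k::field, 'h::ab_group_add) hopf \<Rightarrow> ('h \<Rightarrow> 'k) \<Rightarrow> bool" where
  "character HA f \<longleftrightarrow> lin_fun HA f \<and> (\<forall>x y. f (mul HA x y) = f x * f y) \<and> f (one HA) = 1"

definition char_inv :: "('k::field, 'h::ab_group_add) hopf \<Rightarrow> ('h \<Rightarrow> 'k) \<Rightarrow> 'h \<Rightarrow> 'k" where
  "char_inv HA f = f \<circ> ant HA"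

text \<open>Graded dual: linear functionals vanishing on all but finitely many H_n,
  i.e. the direct sum of the (H_n)^*.\<close>
definition gdual :: "('k::field, 'h::ab_group_add) hopf \<Rightarrow> ('h \<Rightarrow> 'k) set" where
  "gdual HA = {f. lin_fun HA f \<and> (\<exists>N. \<forall>n\<ge>N. \<forall>x\<in>grd HA n. f x = 0)}"

definition dual_ideal :: "('k::field, 'h::ab_group_add) hopf \<Rightarrow> ('h \<Rightarrow> 'k) set \<Rightarrow> ('h \<Rightarrow> 'k) set" where
  "dual_ideal HA G = \<Inter>{J. J \<subseteq> gdual HA \<and> G \<subseteq> J \<and> (\<lambda>x. 0) \<in> J
      \<and> (\<forall>f\<in>J. \<forall>g\<in>J. (\<lambda>x. f x + g x) \<in> J)
      \<and> (\<forall>c. \<forall>f\<in>J. (\<lambda>x. c * f x) \<in> J)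
      \<and> (\<forall>a\<in>gdual HA. \<forall>f\<in>J. conv HA a f \<in> J \<and> conv HA f a \<in> J)}"

definition Iideal :: "('k::field, 'h::ab_group_add) hopf \<Rightarrow> ('h \<Rightarrow> 'k) \<Rightarrow> ('h \<Rightarrow> 'k) \<Rightarrow> ('h \<Rightarrow> 'k) set" where
  "Iideal HA f g = dual_ideal HA {(\<lambda>x. comp HA f n x - comp HA g n x) | n. True}"

definition graded_subcoalg :: "('k::field, 'h::ab_group_add) hopf \<Rightarrow> 'h set \<Rightarrow> bool" where
  "graded_subcoalg HA C \<longleftrightarrow> module.subspace (scl HA) C
     \<and> (\<forall>x\<in>C. \<forall>n. hproj HA n x \<in> C)
     \<and> (\<forall>x\<in>C. \<exists>ys. teq HA (cop HA x) ys \<and> set ys \<subseteq> C \<times> C)"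

definition Ssub :: "('k::field, 'h::ab_group_add) hopf \<Rightarrow> ('h \<Rightarrow> 'k) \<Rightarrow> ('h \<Rightarrow> 'k) \<Rightarrow> 'h set" where
  "Ssub HA f g = (GREATEST C. graded_subcoalg HA C \<and> (\<forall>x\<in>C. f x = g x))"

end

theory Submission
  imports Defs
begin


lemma sum_list_pair_cong:
  "(\<And>a b. (a, b) \<in> set xs \<Longrightarrow> F a b = G a b) \<Longrightarrow> (\<Sum>(a, b)\<leftarrow>xs. F a b) = (\<Sum>(a, b)\<leftarrow>xs. G a b)"
  by (induction xs) auto

lemma sum_list_pair_zero:
  "(\<And>a b. (a, b) \<in> set xs \<Longrightarrow> F a b = 0) \<Longrightarrow> (\<Sum>(a, b)\<leftarrow>xs. F a b) = (0::'a::comm_monoid_add)"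
  by (induction xs) auto

lemma sum_list_pair_cmult:
  "(\<Sum>(a, b)\<leftarrow>xs. c * F a b) = (c::'a::comm_ring) * (\<Sum>(a, b)\<leftarrow>xs. F a b)"
  by (induction xs) (auto simp: algebra_simps)

lemma sum_list_pair_diff:
  "(\<Sum>(a, b)\<leftarrow>xs. F a b - G a b) = (\<Sum>(a, b)\<leftarrow>xs. F a b) - (\<Sum>(a, b)\<leftarrow>xs. (G a b::'a::ab_group_add))"
  by (induction xs) (auto simp: algebra_simps)

lemma sum_sum_list_swap:
  "(\<Sum>i\<in>A. (\<Sum>(a, b)\<leftarrow>xs. F i a b)) = (\<Sum>(a, b)\<leftarrow>xs. \<Sum>i\<in>A. (F i a b::'a::comm_monoid_add))"
  by (induction xs) (auto simp: sum.distrib)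

lemma teval_append: "teval f g (xs @ ys) = teval f g xs + teval f g ys"
  by (simp add: teval_def)

lemma conv_teval: "conv HA f g x = teval f g (cop HA x)"
  by (simp add: conv_def teval_def)

lemma lin_add: "lin_fun HA f \<Longrightarrow> f (x + y) = f x + f y"
  by (simp add: lin_fun_def)

lemma lin_scl: "lin_fun HA f \<Longrightarrow> f (scl HA c x) = c * f x"
  by (simp add: lin_fun_def)

lemma lin_zero: "lin_fun HA f \<Longrightarrow> f 0 = 0"
proof -
  assume "lin_fun HA f"
  then have "f (0 + 0) = f 0 + f 0" by (rule lin_add)
  then have "f 0 = f 0 + f 0" by (simp only: add_0_right)
  then show ?thesis by (metis add_cancel_left_right)
qed

lemma lin_minus: "lin_fun HA f \<Longrightarrow> f (- x) = - f x"
proof -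
  assume l: "lin_fun HA f"
  then have "f (x + - x) = f x + f (- x)" by (rule lin_add)
  then have "0 = f x + f (- x)" by (simp only: add.right_inverse lin_zero[OF l])
  then show ?thesis by (metis add.commute minus_unique)
qed

lemma lin_diff: "lin_fun HA f \<Longrightarrow> f (x - y) = f x - f y"
proof -
  assume l: "lin_fun HA f"
  have "f (x + - y) = f x + f (- y)" by (rule lin_add[OF l])
  then show ?thesis by (simp add: lin_minus[OF l])
qed

lemma lin_sum_list_pair: "lin_fun HA f \<Longrightarrow> f (\<Sum>(a, b)\<leftarrow>xs. h a b) = (\<Sum>(a, b)\<leftarrow>xs. f (h a b))"
  by (induction xs) (auto simp: lin_zero lin_add)

lemma lin_sum: "lin_fun HA f \<Longrightarrow> f (sum h A) = (\<Sum>i\<in>A. f (h i))"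
  by (induction A rule: infinite_finite_induct) (auto simp: lin_zero lin_add)

lemma lin_fun_diff: "lin_fun HA f \<Longrightarrow> lin_fun HA g \<Longrightarrow> lin_fun HA (\<lambda>x. f x - g x)"
  by (simp add: lin_fun_def algebra_simps)

locale gch =
  fixes HA :: "('k::field, 'h::ab_group_add) hopf"
  assumes gch: "graded_connected_hopf HA"
begin

lemma vs: "vector_space (scl HA)" using gch unfolding graded_connected_hopf_def by blast

sublocale vector_space "scl HA" by (rule vs)

lemma ax_cop_add: "\<forall>x y. teq HA (cop HA (x + y)) (cop HA x @ cop HA y)"
  using gch unfolding graded_connected_hopf_def by (elim conjE) assumption
lemmas cop_add = ax_cop_add[rule_format]
lemma ax_cop_scl: "\<forall>c x. teq HA (cop HA (scl HA c x)) (map (\<lambda>(a, b). (scl HA c a, b)) (cop HA x))"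
  using gch unfolding graded_connected_hopf_def by (elim conjE) assumption
lemmas cop_scl = ax_cop_scl[rule_format]
lemma ax_coassoc: "\<forall>x f g h. lin_fun HA f \<longrightarrow> lin_fun HA g \<longrightarrow> lin_fun HA h \<longrightarrow>
        (\<Sum>(a, b)\<leftarrow>cop HA x. teval f g (cop HA a) * h b)
      = (\<Sum>(a, b)\<leftarrow>cop HA x. f a * teval g h (cop HA b))"
  using gch unfolding graded_connected_hopf_def by (elim conjE) assumption
lemmas coassoc = ax_coassoc[rule_format]
lemma cou_lin: "lin_fun HA (cou HA)"
  using gch unfolding graded_connected_hopf_def by (elim conjE) assumption
lemma ax_cou_l: "\<forall>x. (\<Sum>(a, b)\<leftarrow>cop HA x. scl HA (cou HA a) b) = x"
  using gch unfolding graded_connected_hopf_def by (elim conjE) assumption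
lemmas cou_l = ax_cou_l[rule_format]
lemma ax_cou_r: "\<forall>x. (\<Sum>(a, b)\<leftarrow>cop HA x. scl HA (cou HA b) a) = x"
  using gch unfolding graded_connected_hopf_def by (elim conjE) assumption
lemmas cou_r = ax_cou_r[rule_format]
lemma ax_ant_add: "\<forall>x y. ant HA (x + y) = ant HA x + ant HA y"
  using gch unfolding graded_connected_hopf_def by (elim conjE) assumption
lemmas ant_add = ax_ant_add[rule_format]
lemma ax_ant_scl: "\<forall>c x. ant HA (scl HA c x) = scl HA c (ant HA x)"
  using gch unfolding graded_connected_hopf_def by (elim conjE) assumption
lemmas ant_scl = ax_ant_scl[rule_format]
lemma ax_ant_l: "\<forall>x. (\<Sum>(a, b)\<leftarrow>cop HA x. mul HA (ant HA a) b) = scl HA (cou HA x) (one HA)"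
  using gch unfolding graded_connected_hopf_def by (elim conjE) assumption
lemmas ant_l = ax_ant_l[rule_format]
lemma ax_ant_r: "\<forall>x. (\<Sum>(a, b)\<leftarrow>cop HA x. mul HA a (ant HA b)) = scl HA (cou HA x) (one HA)"
  using gch unfolding graded_connected_hopf_def by (elim conjE) assumption
lemmas ant_r = ax_ant_r[rule_format]
lemma ax_grd_sub: "\<forall>n. module.subspace (scl HA) (grd HA n)"
  using gch unfolding graded_connected_hopf_def by (elim conjE) assumption
lemma grd_sub: "subspace (grd HA n)" using ax_grd_sub by blast
lemma ax_grd_ex: "\<forall>x. \<exists>xs N. (\<forall>m. xs m \<in> grd HA m) \<and> x = (\<Sum>m<N. xs m)"
  using gch unfolding graded_connected_hopf_def by (elim conjE) assumption
lemmas grd_ex = ax_grd_ex[rule_format]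
lemma ax_grd_indep: "\<forall>xs N. (\<forall>m. xs m \<in> grd HA m) \<longrightarrow> (\<Sum>m<N. xs m) = 0 \<longrightarrow> (\<forall>m<N. xs m = 0)"
  using gch unfolding graded_connected_hopf_def by (elim conjE) assumption
lemmas grd_indep = ax_grd_indep[rule_format]
lemma ax_grd_cop: "\<forall>n x. x \<in> grd HA n \<longrightarrow> (\<exists>ys. teq HA (cop HA x) ys \<and>
          (\<forall>(a, b)\<in>set ys. \<exists>i j. i + j = n \<and> a \<in> grd HA i \<and> b \<in> grd HA j))"
  using gch unfolding graded_connected_hopf_def by (elim conjE) assumption
lemmas grd_cop = ax_grd_cop[rule_format]

end


context gch begin

lemma teq_eval: "teq HA xs ys \<Longrightarrow> lin_fun HA f \<Longrightarrow> lin_fun HA g \<Longrightarrow> teval f g xs = teval f g ys"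
  by (simp add: teq_def)

lemma teval_map_scl: "lin_fun HA f \<Longrightarrow> teval f g (map (\<lambda>(a, b). (scl HA c a, b)) xs) = c * teval f g xs"
  by (induction xs) (auto simp: teval_def lin_scl algebra_simps)

lemma conv_lin:
  assumes f: "lin_fun HA f" and g: "lin_fun HA g"
  shows "lin_fun HA (conv HA f g)"
  unfolding lin_fun_def
proof (intro conjI allI)
  fix x y
  show "conv HA f g (x + y) = conv HA f g x + conv HA f g y"
    unfolding conv_teval using teq_eval[OF cop_add f g] by (simp add: teval_append)
next
  fix c x
  show "conv HA f g (scl HA c x) = c * conv HA f g x"
    unfolding conv_teval using teq_eval[OF cop_scl f g] by (simp add: teval_map_scl[OF f])
qed

lemma ci_lin: "character HA \<psi> \<Longrightarrow> lin_fun HA (char_inv HA \<psi>)"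
  by (simp add: character_def lin_fun_def char_inv_def ant_add ant_scl)

lemma char_lin: "character HA \<psi> \<Longrightarrow> lin_fun HA \<psi>"
  by (simp add: character_def)

lemma conv_assoc:
  assumes "lin_fun HA f" "lin_fun HA g" "lin_fun HA h"
  shows "conv HA (conv HA f g) h = conv HA f (conv HA g h)"
proof
  fix x
  show "conv HA (conv HA f g) h x = conv HA f (conv HA g h) x"
    using coassoc[OF assms, of x] by (simp add: conv_def teval_def)
qed

lemma conv_cou_r:
  assumes f: "lin_fun HA f"
  shows "conv HA f (cou HA) = f"
proof
  fix x
  have "f x = f (\<Sum>(a, b)\<leftarrow>cop HA x. scl HA (cou HA b) a)" by (simp add: cou_r)
  also have "\<dots> = (\<Sum>(a, b)\<leftarrow>cop HA x. f (scl HA (cou HA b) a))" by (rule lin_sum_list_pair[OF f])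
  also have "\<dots> = (\<Sum>(a, b)\<leftarrow>cop HA x. f a * cou HA b)"
    by (rule sum_list_pair_cong) (simp add: lin_scl[OF f] mult.commute)
  finally show "conv HA f (cou HA) x = f x" by (simp add: conv_def)
qed

lemma conv_cou_l:
  assumes f: "lin_fun HA f"
  shows "conv HA (cou HA) f = f"
proof
  fix x
  have "f x = f (\<Sum>(a, b)\<leftarrow>cop HA x. scl HA (cou HA a) b)" by (simp add: cou_l)
  also have "\<dots> = (\<Sum>(a, b)\<leftarrow>cop HA x. f (scl HA (cou HA a) b))" by (rule lin_sum_list_pair[OF f])
  also have "\<dots> = (\<Sum>(a, b)\<leftarrow>cop HA x. cou HA a * f b)"
    by (rule sum_list_pair_cong) (simp add: lin_scl[OF f])
  finally show "conv HA (cou HA) f x = f x" by (simp add: conv_def)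
qed

lemma conv_ci_l:
  assumes p: "character HA \<psi>"
  shows "conv HA (char_inv HA \<psi>) \<psi> = cou HA"
proof
  fix x
  have l: "lin_fun HA \<psi>" using p by (simp add: character_def)
  have "conv HA (char_inv HA \<psi>) \<psi> x = (\<Sum>(a, b)\<leftarrow>cop HA x. \<psi> (mul HA (ant HA a) b))"
    unfolding conv_def char_inv_def using p by (simp add: character_def)
  also have "\<dots> = \<psi> (\<Sum>(a, b)\<leftarrow>cop HA x. mul HA (ant HA a) b)" by (rule lin_sum_list_pair[OF l, symmetric])
  also have "\<dots> = cou HA x" using p by (simp add: ant_l lin_scl[OF l] character_def)
  finally show "conv HA (char_inv HA \<psi>) \<psi> x = cou HA x" .
qed

lemma conv_ci_r:
  assumes p: "character HA \<psi>"
  shows "conv HA \<psi> (char_inv HA \<psi>) = cou HA"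
proof
  fix x
  have l: "lin_fun HA \<psi>" using p by (simp add: character_def)
  have "conv HA \<psi> (char_inv HA \<psi>) x = (\<Sum>(a, b)\<leftarrow>cop HA x. \<psi> (mul HA a (ant HA b)))"
    unfolding conv_def char_inv_def using p by (simp add: character_def)
  also have "\<dots> = \<psi> (\<Sum>(a, b)\<leftarrow>cop HA x. mul HA a (ant HA b))" by (rule lin_sum_list_pair[OF l, symmetric])
  also have "\<dots> = cou HA x" using p by (simp add: ant_r lin_scl[OF l] character_def)
  finally show "conv HA \<psi> (char_inv HA \<psi>) x = cou HA x" .
qed

lemma conv_diff_r: "conv HA f (\<lambda>x. g x - h x) = (\<lambda>x. conv HA f g x - conv HA f h x)"
  by (simp add: conv_def right_diff_distrib sum_list_pair_diff)

lemma conv_diff_l: "conv HA (\<lambda>x. g x - h x) f = (\<lambda>x. conv HA g f x - conv HA h f x)"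
  by (simp add: conv_def left_diff_distrib sum_list_pair_diff)

lemma sub_iff1:
  assumes C: "\<forall>x\<in>C. \<exists>ys. teq HA (cop HA x) ys \<and> set ys \<subseteq> C \<times> C"
    and p: "character HA \<phi>" and q: "character HA \<psi>"
  shows "(\<forall>x\<in>C. \<phi> x = \<psi> x) \<longleftrightarrow> (\<forall>x\<in>C. conv HA (char_inv HA \<psi>) \<phi> x = cou HA x)"
proof -
  have lp: "lin_fun HA \<phi>" and lq: "lin_fun HA \<psi>" and lc: "lin_fun HA (char_inv HA \<psi>)"
    using p q by (auto simp: char_lin ci_lin)
  show ?thesis
  proof
    assume eq: "\<forall>x\<in>C. \<phi> x = \<psi> x"
    show "\<forall>x\<in>C. conv HA (char_inv HA \<psi>) \<phi> x = cou HA x"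
    proof
      fix x assume x: "x \<in> C"
      then obtain ys where t: "teq HA (cop HA x) ys" and s: "set ys \<subseteq> C \<times> C" using C by blast
      have "conv HA (char_inv HA \<psi>) \<phi> x = teval (char_inv HA \<psi>) \<phi> ys"
        by (simp add: conv_teval teq_eval[OF t lc lp])
      also have "\<dots> = teval (char_inv HA \<psi>) \<psi> ys"
        unfolding teval_def by (rule sum_list_pair_cong) (use s eq in auto)
      also have "\<dots> = conv HA (char_inv HA \<psi>) \<psi> x"
        by (simp add: conv_teval teq_eval[OF t lc lq])
      also have "\<dots> = cou HA x" by (simp add: conv_ci_l[OF q])
      finally show "conv HA (char_inv HA \<psi>) \<phi> x = cou HA x" .
    qed
  next
    assume h: "\<forall>x\<in>C. conv HA (char_inv HA \<psi>) \<phi> x = cou HA x"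
    show "\<forall>x\<in>C. \<phi> x = \<psi> x"
    proof
      fix x assume x: "x \<in> C"
      then obtain ys where t: "teq HA (cop HA x) ys" and s: "set ys \<subseteq> C \<times> C" using C by blast
      define \<chi> where "\<chi> = conv HA (char_inv HA \<psi>) \<phi>"
      have lx: "lin_fun HA \<chi>" unfolding \<chi>_def by (rule conv_lin[OF lc lp])
      have e: "\<phi> = conv HA \<psi> \<chi>"
        unfolding \<chi>_def by (simp add: conv_assoc[OF lq lc lp, symmetric] conv_ci_r[OF q] conv_cou_l[OF lp])
      have "\<phi> x = teval \<psi> \<chi> ys"
        by (subst e) (simp add: conv_teval teq_eval[OF t lq lx])
      also have "\<dots> = teval \<psi> (cou HA) ys"
        unfolding teval_def by (rule sum_list_pair_cong) (use s h in \<open>auto simp: \<chi>_def\<close>)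
      also have "\<dots> = conv HA \<psi> (cou HA) x"
        by (simp add: conv_teval teq_eval[OF t lq cou_lin])
      also have "\<dots> = \<psi> x" by (simp add: conv_cou_r[OF lq])
      finally show "\<phi> x = \<psi> x" .
    qed
  qed
qed

lemma sub_iff2:
  assumes C: "\<forall>x\<in>C. \<exists>ys. teq HA (cop HA x) ys \<and> set ys \<subseteq> C \<times> C"
    and p: "character HA \<phi>" and q: "character HA \<psi>"
  shows "(\<forall>x\<in>C. \<phi> x = \<psi> x) \<longleftrightarrow> (\<forall>x\<in>C. conv HA \<phi> (char_inv HA \<psi>) x = cou HA x)"
proof -
  have lp: "lin_fun HA \<phi>" and lq: "lin_fun HA \<psi>" and lc: "lin_fun HA (char_inv HA \<psi>)"
    using p q by (auto simp: char_lin ci_lin)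
  show ?thesis
  proof
    assume eq: "\<forall>x\<in>C. \<phi> x = \<psi> x"
    show "\<forall>x\<in>C. conv HA \<phi> (char_inv HA \<psi>) x = cou HA x"
    proof
      fix x assume x: "x \<in> C"
      then obtain ys where t: "teq HA (cop HA x) ys" and s: "set ys \<subseteq> C \<times> C" using C by blast
      have "conv HA \<phi> (char_inv HA \<psi>) x = teval \<phi> (char_inv HA \<psi>) ys"
        by (simp add: conv_teval teq_eval[OF t lp lc])
      also have "\<dots> = teval \<psi> (char_inv HA \<psi>) ys"
        unfolding teval_def by (rule sum_list_pair_cong) (use s eq in auto)
      also have "\<dots> = conv HA \<psi> (char_inv HA \<psi>) x"
        by (simp add: conv_teval teq_eval[OF t lq lc])
      also have "\<dots> = cou HA x" by (simp add: conv_ci_r[OF q])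
      finally show "conv HA \<phi> (char_inv HA \<psi>) x = cou HA x" .
    qed
  next
    assume h: "\<forall>x\<in>C. conv HA \<phi> (char_inv HA \<psi>) x = cou HA x"
    show "\<forall>x\<in>C. \<phi> x = \<psi> x"
    proof
      fix x assume x: "x \<in> C"
      then obtain ys where t: "teq HA (cop HA x) ys" and s: "set ys \<subseteq> C \<times> C" using C by blast
      define \<chi> where "\<chi> = conv HA \<phi> (char_inv HA \<psi>)"
      have lx: "lin_fun HA \<chi>" unfolding \<chi>_def by (rule conv_lin[OF lp lc])
      have e: "\<phi> = conv HA \<chi> \<psi>"
        unfolding \<chi>_def by (simp add: conv_assoc[OF lp lc lq] conv_ci_l[OF q] conv_cou_r[OF lp])
      have "\<phi> x = teval \<chi> \<psi> ys"
        by (subst e) (simp add: conv_teval teq_eval[OF t lx lq])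
      also have "\<dots> = teval (cou HA) \<psi> ys"
        unfolding teval_def by (rule sum_list_pair_cong) (use s h in \<open>auto simp: \<chi>_def\<close>)
      also have "\<dots> = conv HA (cou HA) \<psi> x"
        by (simp add: conv_teval teq_eval[OF t cou_lin lq])
      also have "\<dots> = \<psi> x" by (simp add: conv_cou_l[OF lq])
      finally show "\<phi> x = \<psi> x" .
    qed
  qed
qed

end


context gch begin

lemma grd_zero: "0 \<in> grd HA m" by (rule subspace_0[OF grd_sub])

lemma sum_ext: "(\<forall>m\<ge>N. xs m = 0) \<Longrightarrow> N \<le> (K::nat) \<Longrightarrow> (\<Sum>m<K. xs m) = (\<Sum>m<N. (xs m :: 'b::comm_monoid_add))"
  by (intro sum.mono_neutral_right) (auto simp: not_less)

lemma decomp_ex: "\<exists>xs N. (\<forall>m. xs m \<in> grd HA m) \<and> (\<forall>m\<ge>N. xs m = 0) \<and> x = (\<Sum>m<N. xs m)"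
proof -
  obtain xs N where g: "\<forall>m. xs m \<in> grd HA m" and x: "x = (\<Sum>m<N. xs m)" using grd_ex by blast
  define xs' where "xs' = (\<lambda>m. if m < N then xs m else 0)"
  have "\<forall>m. xs' m \<in> grd HA m" using g by (simp add: xs'_def grd_zero)
  moreover have "\<forall>m\<ge>N. xs' m = 0" by (simp add: xs'_def)
  moreover have "x = (\<Sum>m<N. xs' m)" unfolding x xs'_def by (rule sum.cong) auto
  ultimately show ?thesis by blast
qed

lemma decomp_uniq:
  assumes gx: "\<forall>m. xs m \<in> grd HA m" and zx: "\<forall>m\<ge>N. xs m = 0" and x: "x = (\<Sum>m<N. xs m)"
    and gy: "\<forall>m. ys m \<in> grd HA m" and zy: "\<forall>m\<ge>M. ys m = 0" and y: "x = (\<Sum>m<M. ys m)"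
  shows "xs n = ys n"
proof -
  define K where "K = max N M"
  define zs where "zs = (\<lambda>m. xs m - ys m)"
  have gz: "\<forall>m. zs m \<in> grd HA m" using gx gy by (simp add: zs_def subspace_diff[OF grd_sub])
  have "(\<Sum>m<K. zs m) = (\<Sum>m<K. xs m) - (\<Sum>m<K. ys m)" by (simp add: zs_def sum_subtractf)
  also have "\<dots> = x - x"
    using sum_ext[OF zx, of K] sum_ext[OF zy, of K] x y by (simp add: K_def)
  finally have "(\<Sum>m<K. zs m) = 0" by simp
  then have "n < K \<Longrightarrow> zs n = 0" using grd_indep[of zs K n] gz by blast
  then show ?thesis using zx zy by (cases "n < K") (auto simp: zs_def K_def)
qed

lemma hproj_eq:
  assumes gx: "\<forall>m. xs m \<in> grd HA m" and zx: "\<forall>m\<ge>N. xs m = 0" and x: "x = (\<Sum>m<N. xs m)"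
  shows "hproj HA n x = xs n"
  unfolding hproj_def
proof (rule the_equality)
  show "\<exists>xs' N'. (\<forall>m. xs' m \<in> grd HA m) \<and> (\<forall>m\<ge>N'. xs' m = 0) \<and> x = (\<Sum>m<N'. xs' m) \<and> xs n = xs' n"
    using assms by blast
next
  fix y assume "\<exists>ys M. (\<forall>m. ys m \<in> grd HA m) \<and> (\<forall>m\<ge>M. ys m = 0) \<and> x = (\<Sum>m<M. ys m) \<and> y = ys n"
  then obtain ys M where "\<forall>m. ys m \<in> grd HA m" "\<forall>m\<ge>M. ys m = 0" "x = (\<Sum>m<M. ys m)" "y = ys n"
    by blast
  then show "y = xs n" using decomp_uniq[OF assms] by metis
qed

lemma hproj_grd: "hproj HA n x \<in> grd HA n"
proof -
  obtain xs N where "\<forall>m. xs m \<in> grd HA m" "\<forall>m\<ge>N. xs m = 0" "x = (\<Sum>m<N. xs m)"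
    using decomp_ex by blast
  then show ?thesis using hproj_eq by metis
qed

lemma hproj_decomp: "\<exists>N. (\<forall>m\<ge>N. hproj HA m x = 0) \<and> x = (\<Sum>m<N. hproj HA m x)"
proof -
  obtain xs N where a: "\<forall>m. xs m \<in> grd HA m" "\<forall>m\<ge>N. xs m = 0" "x = (\<Sum>m<N. xs m)"
    using decomp_ex by blast
  then have "\<And>m. hproj HA m x = xs m" using hproj_eq by blast
  then show ?thesis using a by auto
qed

lemma hproj_add: "hproj HA n (x + y) = hproj HA n x + hproj HA n y"
proof -
  obtain xs N where a: "\<forall>m. xs m \<in> grd HA m" "\<forall>m\<ge>N. xs m = 0" "x = (\<Sum>m<N. xs m)"
    using decomp_ex by blast
  obtain ys M where b: "\<forall>m. ys m \<in> grd HA m" "\<forall>m\<ge>M. ys m = 0" "y = (\<Sum>m<M. ys m)"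
    using decomp_ex by blast
  define K where "K = max N M"
  have e1: "(\<Sum>m<K. xs m) = x" using sum_ext[OF a(2), of K] a(3) by (simp add: K_def)
  have e2: "(\<Sum>m<K. ys m) = y" using sum_ext[OF b(2), of K] b(3) by (simp add: K_def)
  have g: "\<forall>m. xs m + ys m \<in> grd HA m" using a(1) b(1) subspace_add[OF grd_sub] by blast
  have z: "\<forall>m\<ge>K. xs m + ys m = 0" using a(2) b(2) by (simp add: K_def)
  have s: "x + y = (\<Sum>m<K. xs m + ys m)" by (simp only: sum.distrib e1 e2)
  have "hproj HA n (x + y) = xs n + ys n" by (rule hproj_eq[OF g z s])
  then show ?thesis using hproj_eq[OF a] hproj_eq[OF b] by simp
qed

lemma hproj_scl: "hproj HA n (scl HA c x) = scl HA c (hproj HA n x)"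
proof -
  obtain xs N where a: "\<forall>m. xs m \<in> grd HA m" "\<forall>m\<ge>N. xs m = 0" "x = (\<Sum>m<N. xs m)"
    using decomp_ex by blast
  have s: "scl HA c x = (\<Sum>m<N. scl HA c (xs m))" using a(3) by (simp add: scale_sum_right)
  have g: "\<forall>m. scl HA c (xs m) \<in> grd HA m" using a(1) subspace_scale[OF grd_sub] by blast
  have z: "\<forall>m\<ge>N. scl HA c (xs m) = 0" using a(2) by simp
  have "hproj HA n (scl HA c x) = scl HA c (xs n)" by (rule hproj_eq[OF g z s])
  then show ?thesis using hproj_eq[OF a] by simp
qed

lemma hproj_hom: "x \<in> grd HA k \<Longrightarrow> hproj HA n x = (if n = k then x else 0)"
proof -
  assume x: "x \<in> grd HA k"
  define xs where "xs = (\<lambda>m. if m = k then x else (0::'h))"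
  have "\<forall>m. xs m \<in> grd HA m" using x by (simp add: xs_def grd_zero)
  moreover have "\<forall>m\<ge>Suc k. xs m = 0" by (simp add: xs_def)
  moreover have "x = (\<Sum>m<Suc k. xs m)" by (simp add: xs_def)
  ultimately have "hproj HA n x = xs n" by (rule hproj_eq)
  then show ?thesis by (simp add: xs_def)
qed

lemma comp_lin: "lin_fun HA f \<Longrightarrow> lin_fun HA (comp HA f n)"
  by (simp add: lin_fun_def comp_def hproj_add hproj_scl)

lemma comp_gdual: "lin_fun HA f \<Longrightarrow> comp HA f n \<in> gdual HA"
  unfolding gdual_def
proof (intro CollectI conjI exI[of _ "Suc n"] allI impI ballI)
  assume "lin_fun HA f" then show "lin_fun HA (comp HA f n)" by (rule comp_lin)
next
  fix m x assume f: "lin_fun HA f" and m: "Suc n \<le> m" and x: "x \<in> grd HA m"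
  then show "comp HA f n x = 0" by (simp add: comp_def hproj_hom lin_zero)
qed

lemma vanish:
  assumes L: "lin_fun HA L" and v: "\<And>m x. m \<noteq> n \<Longrightarrow> x \<in> grd HA m \<Longrightarrow> L x = 0"
  shows "L x = L (hproj HA n x)"
proof -
  obtain N where z: "\<forall>m\<ge>N. hproj HA m x = 0" and x: "x = (\<Sum>m<N. hproj HA m x)"
    using hproj_decomp by blast
  have "L x = (\<Sum>m<N. L (hproj HA m x))" by (subst x) (rule lin_sum[OF L])
  also have "\<dots> = (\<Sum>m<N. if m = n then L (hproj HA n x) else 0)"
    by (rule sum.cong) (auto simp: v hproj_grd)
  also have "\<dots> = L (hproj HA n x)"
    using z lin_zero[OF L] by (cases "n < N") auto
  finally show ?thesis .
qed

lemma conv_comp_zero: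
  assumes f: "lin_fun HA f" and g: "lin_fun HA g" and x: "x \<in> grd HA k" and ij: "i + j \<noteq> k"
  shows "conv HA (comp HA f i) (comp HA g j) x = 0"
proof -
  obtain ys where t: "teq HA (cop HA x) ys"
    and h: "\<forall>(a, b)\<in>set ys. \<exists>i j. i + j = k \<and> a \<in> grd HA i \<and> b \<in> grd HA j"
    using grd_cop[OF x] by blast
  have "conv HA (comp HA f i) (comp HA g j) x = teval (comp HA f i) (comp HA g j) ys"
    by (simp add: conv_teval teq_eval[OF t comp_lin[OF f] comp_lin[OF g]])
  also have "\<dots> = 0" unfolding teval_def
  proof (rule sum_list_pair_zero)
    fix a b assume "(a, b) \<in> set ys"
    then obtain i' j' where "i' + j' = k" "a \<in> grd HA i'" "b \<in> grd HA j'" using h by blast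
    then show "comp HA f i a * comp HA g j b = 0"
      using ij by (auto simp: comp_def hproj_hom lin_zero[OF f] lin_zero[OF g])
  qed
  finally show ?thesis .
qed

lemma conv_grd:
  assumes f: "lin_fun HA f" and g: "lin_fun HA g" and x: "x \<in> grd HA k"
  shows "conv HA f g x = (\<Sum>i\<le>k. conv HA (comp HA f i) (comp HA g (k - i)) x)"
proof -
  obtain ys where t: "teq HA (cop HA x) ys"
    and h: "\<forall>(a, b)\<in>set ys. \<exists>i j. i + j = k \<and> a \<in> grd HA i \<and> b \<in> grd HA j"
    using grd_cop[OF x] by blast
  have "(\<Sum>i\<le>k. conv HA (comp HA f i) (comp HA g (k - i)) x)
      = (\<Sum>i\<le>k. teval (comp HA f i) (comp HA g (k - i)) ys)"
    by (rule sum.cong) (simp_all add: conv_teval teq_eval[OF t comp_lin[OF f] comp_lin[OF g]])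
  also have "\<dots> = (\<Sum>(a, b)\<leftarrow>ys. \<Sum>i\<le>k. comp HA f i a * comp HA g (k - i) b)"
    unfolding teval_def by (rule sum_sum_list_swap)
  also have "\<dots> = (\<Sum>(a, b)\<leftarrow>ys. f a * g b)"
  proof (rule sum_list_pair_cong)
    fix a b assume "(a, b) \<in> set ys"
    then obtain i' j' where ij: "i' + j' = k" "a \<in> grd HA i'" "b \<in> grd HA j'" using h by blast
    have "(\<Sum>i\<le>k. comp HA f i a * comp HA g (k - i) b) = (\<Sum>i\<le>k. if i = i' then f a * g b else 0)"
      by (rule sum.cong) (use ij in \<open>auto simp: comp_def hproj_hom lin_zero[OF f]\<close>)
    also have "\<dots> = f a * g b" using ij by simp
    finally show "(\<Sum>i\<le>k. comp HA f i a * comp HA g (k - i) b) = f a * g b" .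
  qed
  also have "\<dots> = conv HA f g x"
    using teq_eval[OF t f g] by (simp add: conv_teval teval_def)
  finally show ?thesis by simp
qed

lemma conv_hproj:
  assumes f: "lin_fun HA f" and g: "lin_fun HA g"
  shows "conv HA f g (hproj HA n x) = (\<Sum>i\<le>n. conv HA (comp HA f i) (comp HA g (n - i)) x)"
proof -
  have "conv HA f g (hproj HA n x) = (\<Sum>i\<le>n. conv HA (comp HA f i) (comp HA g (n - i)) (hproj HA n x))"
    by (rule conv_grd[OF f g hproj_grd])
  also have "\<dots> = (\<Sum>i\<le>n. conv HA (comp HA f i) (comp HA g (n - i)) x)"
  proof (rule sum.cong)
    fix i assume i: "i \<in> {..n}"
    show "conv HA (comp HA f i) (comp HA g (n - i)) (hproj HA n x) = conv HA (comp HA f i) (comp HA g (n - i)) x"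
      by (rule vanish[symmetric], rule conv_lin[OF comp_lin[OF f] comp_lin[OF g]],
          rule conv_comp_zero[OF f g]) (use i in auto)
  qed simp
  finally show ?thesis .
qed

end


lemma J_sum:
  assumes z: "(\<lambda>x. 0) \<in> J" and add: "\<forall>f\<in>J. \<forall>g\<in>J. (\<lambda>x. f x + g x) \<in> J"
    and A: "finite A" and F: "\<forall>i\<in>A. F i \<in> J"
  shows "(\<lambda>x. \<Sum>i\<in>A. F i x) \<in> J"
  using A F
proof (induction A rule: finite_induct)
  case empty
  then show ?case using z by simp
next
  case (insert a A)
  have a: "F a \<in> J" using insert.prems by simp
  have b: "(\<lambda>x. \<Sum>i\<in>A. F i x) \<in> J" using insert by simp
  have "(\<lambda>x. F a x + (\<Sum>i\<in>A. F i x)) \<in> J" using add[rule_format, OF a b] by simp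
  then show ?case using insert by simp
qed

context gch begin

lemma Iideal_sub:
  assumes lp: "lin_fun HA \<phi>" and lq: "lin_fun HA \<psi>" and lp': "lin_fun HA \<phi>'" and lq': "lin_fun HA \<psi>'"
    and lG: "lin_fun HA G"
    and eq: "(\<forall>y. \<phi> y - \<psi> y = conv HA G (\<lambda>x. \<phi>' x - \<psi>' x) y)
           \<or> (\<forall>y. \<phi> y - \<psi> y = conv HA (\<lambda>x. \<phi>' x - \<psi>' x) G y)"
  shows "Iideal HA \<phi> \<psi> \<subseteq> Iideal HA \<phi>' \<psi>'"
  unfolding Iideal_def dual_ideal_def
proof (rule Inter_anti_mono, rule subsetI)
  define d where "d = (\<lambda>x. \<phi>' x - \<psi>' x)"
  have ld: "lin_fun HA d" unfolding d_def by (rule lin_fun_diff[OF lp' lq'])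
  fix J assume "J \<in> {J. J \<subseteq> gdual HA \<and> {(\<lambda>x. comp HA \<phi>' n x - comp HA \<psi>' n x) |n. True} \<subseteq> J \<and> (\<lambda>x. 0) \<in> J
      \<and> (\<forall>f\<in>J. \<forall>g\<in>J. (\<lambda>x. f x + g x) \<in> J)
      \<and> (\<forall>c. \<forall>f\<in>J. (\<lambda>x. c * f x) \<in> J)
      \<and> (\<forall>a\<in>gdual HA. \<forall>f\<in>J. conv HA a f \<in> J \<and> conv HA f a \<in> J)}"
  then have J1: "J \<subseteq> gdual HA" and J2: "{(\<lambda>x. comp HA \<phi>' n x - comp HA \<psi>' n x) |n. True} \<subseteq> J"
    and J3: "(\<lambda>x. 0) \<in> J" and J4: "\<forall>f\<in>J. \<forall>g\<in>J. (\<lambda>x. f x + g x) \<in> J"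
    and J5: "\<forall>c. \<forall>f\<in>J. (\<lambda>x. c * f x) \<in> J"
    and J6: "\<forall>a\<in>gdual HA. \<forall>f\<in>J. conv HA a f \<in> J \<and> conv HA f a \<in> J"
    by blast+
  have dJ: "comp HA d j \<in> J" for j
  proof -
    have "comp HA d j = (\<lambda>x. comp HA \<phi>' j x - comp HA \<psi>' j x)" by (simp add: comp_def d_def)
    then show ?thesis using J2 by auto
  qed
  have "(\<lambda>x. comp HA \<phi> n x - comp HA \<psi> n x) \<in> J" for n
  proof (rule disjE[OF eq])
    assume e: "\<forall>y. \<phi> y - \<psi> y = conv HA G (\<lambda>x. \<phi>' x - \<psi>' x) y"
    have "(\<lambda>x. comp HA \<phi> n x - comp HA \<psi> n x) = (\<lambda>x. \<Sum>i\<le>n. conv HA (comp HA G i) (comp HA d (n - i)) x)"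
    proof
      fix x
      have "comp HA \<phi> n x - comp HA \<psi> n x = conv HA G d (hproj HA n x)"
        using e by (simp add: comp_def d_def)
      also have "\<dots> = (\<Sum>i\<le>n. conv HA (comp HA G i) (comp HA d (n - i)) x)"
        by (rule conv_hproj[OF lG ld])
      finally show "comp HA \<phi> n x - comp HA \<psi> n x = (\<Sum>i\<le>n. conv HA (comp HA G i) (comp HA d (n - i)) x)" .
    qed
    moreover have "(\<lambda>x. \<Sum>i\<le>n. conv HA (comp HA G i) (comp HA d (n - i)) x) \<in> J"
      by (rule J_sum[OF J3 J4]) (use J6 comp_gdual[OF lG] dJ in auto)
    ultimately show ?thesis by simp
  next
    assume e: "\<forall>y. \<phi> y - \<psi> y = conv HA (\<lambda>x. \<phi>' x - \<psi>' x) G y"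
    have "(\<lambda>x. comp HA \<phi> n x - comp HA \<psi> n x) = (\<lambda>x. \<Sum>i\<le>n. conv HA (comp HA d i) (comp HA G (n - i)) x)"
    proof
      fix x
      have "comp HA \<phi> n x - comp HA \<psi> n x = conv HA d G (hproj HA n x)"
        using e by (simp add: comp_def d_def)
      also have "\<dots> = (\<Sum>i\<le>n. conv HA (comp HA d i) (comp HA G (n - i)) x)"
        by (rule conv_hproj[OF ld lG])
      finally show "comp HA \<phi> n x - comp HA \<psi> n x = (\<Sum>i\<le>n. conv HA (comp HA d i) (comp HA G (n - i)) x)" .
    qed
    moreover have "(\<lambda>x. \<Sum>i\<le>n. conv HA (comp HA d i) (comp HA G (n - i)) x) \<in> J"
      by (rule J_sum[OF J3 J4]) (use J6 comp_gdual[OF lG] dJ in auto)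
    ultimately show ?thesis by simp
  qed
  then have "{(\<lambda>x. comp HA \<phi> n x - comp HA \<psi> n x) |n. True} \<subseteq> J" by blast
  then show "J \<in> {J. J \<subseteq> gdual HA \<and> {(\<lambda>x. comp HA \<phi> n x - comp HA \<psi> n x) |n. True} \<subseteq> J \<and> (\<lambda>x. 0) \<in> J
      \<and> (\<forall>f\<in>J. \<forall>g\<in>J. (\<lambda>x. f x + g x) \<in> J)
      \<and> (\<forall>c. \<forall>f\<in>J. (\<lambda>x. c * f x) \<in> J)
      \<and> (\<forall>a\<in>gdual HA. \<forall>f\<in>J. conv HA a f \<in> J \<and> conv HA f a \<in> J)}"
    using J1 J3 J4 J5 J6 by blast
qed

lemma Iideal_dir:
  assumes p: "character HA \<phi>" and p': "character HA \<phi>'"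
    and q: "character HA \<psi>" and q': "character HA \<psi>'"
    and h: "conv HA (char_inv HA \<psi>) \<phi> = conv HA (char_inv HA \<psi>') \<phi>'
         \<or> conv HA \<phi> (char_inv HA \<psi>) = conv HA \<phi>' (char_inv HA \<psi>')"
  shows "Iideal HA \<phi> \<psi> \<subseteq> Iideal HA \<phi>' \<psi>'"
proof -
  have lp: "lin_fun HA \<phi>" and lq: "lin_fun HA \<psi>" and lp': "lin_fun HA \<phi>'" and lq': "lin_fun HA \<psi>'"
    and lc: "lin_fun HA (char_inv HA \<psi>)" and lc': "lin_fun HA (char_inv HA \<psi>')"
    using p q p' q' by (auto simp: char_lin ci_lin)
  show ?thesis
  proof (rule disjE[OF h])
    assume e: "conv HA (char_inv HA \<psi>) \<phi> = conv HA (char_inv HA \<psi>') \<phi>'"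
    define G where "G = conv HA \<psi> (char_inv HA \<psi>')"
    have lG: "lin_fun HA G" unfolding G_def by (rule conv_lin[OF lq lc'])
    have g1: "conv HA G \<phi>' = \<phi>"
      unfolding G_def
      by (simp add: conv_assoc[OF lq lc' lp'] e[symmetric] conv_assoc[OF lq lc lp, symmetric]
          conv_ci_r[OF q] conv_cou_l[OF lp])
    have g2: "conv HA G \<psi>' = \<psi>"
      unfolding G_def by (simp add: conv_assoc[OF lq lc' lq'] conv_ci_l[OF q'] conv_cou_r[OF lq])
    have "\<forall>y. \<phi> y - \<psi> y = conv HA G (\<lambda>x. \<phi>' x - \<psi>' x) y"
      by (simp add: conv_diff_r g1 g2)
    then show ?thesis by (rule Iideal_sub[OF lp lq lp' lq' lG disjI1])
  next
    assume e: "conv HA \<phi> (char_inv HA \<psi>) = conv HA \<phi>' (char_inv HA \<psi>')"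
    define G where "G = conv HA (char_inv HA \<psi>') \<psi>"
    have lG: "lin_fun HA G" unfolding G_def by (rule conv_lin[OF lc' lq])
    have g1: "conv HA \<phi>' G = \<phi>"
      unfolding G_def
      by (simp add: conv_assoc[OF lp' lc' lq, symmetric] e[symmetric] conv_assoc[OF lp lc lq]
          conv_ci_l[OF q] conv_cou_r[OF lp])
    have g2: "conv HA \<psi>' G = \<psi>"
      unfolding G_def by (simp add: conv_assoc[OF lq' lc' lq, symmetric] conv_ci_r[OF q'] conv_cou_l[OF lq])
    have "\<forall>y. \<phi> y - \<psi> y = conv HA (\<lambda>x. \<phi>' x - \<psi>' x) G y"
      by (simp add: conv_diff_l g1 g2)
    then show ?thesis by (rule Iideal_sub[OF lp lq lp' lq' lG disjI2])
  qed
qed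

lemma Ssub_eq:
  assumes p: "character HA \<phi>" and p': "character HA \<phi>'"
    and q: "character HA \<psi>" and q': "character HA \<psi>'"
    and h: "conv HA (char_inv HA \<psi>) \<phi> = conv HA (char_inv HA \<psi>') \<phi>'
         \<or> conv HA \<phi> (char_inv HA \<psi>) = conv HA \<phi>' (char_inv HA \<psi>')"
  shows "Ssub HA \<phi> \<psi> = Ssub HA \<phi>' \<psi>'"
proof -
  have "(graded_subcoalg HA C \<and> (\<forall>x\<in>C. \<phi> x = \<psi> x)) = (graded_subcoalg HA C \<and> (\<forall>x\<in>C. \<phi>' x = \<psi>' x))" for C
  proof (cases "graded_subcoalg HA C")
    case True
    then have C: "\<forall>x\<in>C. \<exists>ys. teq HA (cop HA x) ys \<and> set ys \<subseteq> C \<times> C"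
      by (simp add: graded_subcoalg_def)
    show ?thesis
    proof (rule disjE[OF h])
      assume e: "conv HA (char_inv HA \<psi>) \<phi> = conv HA (char_inv HA \<psi>') \<phi>'"
      show ?thesis using sub_iff1[OF C p q] sub_iff1[OF C p' q'] e by simp
    next
      assume e: "conv HA \<phi> (char_inv HA \<psi>) = conv HA \<phi>' (char_inv HA \<psi>')"
      show ?thesis using sub_iff2[OF C p q] sub_iff2[OF C p' q'] e by simp
    qed
  qed simp
  then show ?thesis unfolding Ssub_def by simp
qed

end

theorem proposition5p5:
  fixes HA :: "('k::field, 'h::ab_group_add) hopf"
    and \<phi> \<phi>' \<psi> \<psi>' :: "'h \<Rightarrow> 'k"
  assumes "graded_connected_hopf HA"
    and "character HA \<phi>" and "character HA \<phi>'"
    and "character HA \<psi>" and "character HA \<psi>'"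
    and "conv HA (char_inv HA \<psi>) \<phi> = conv HA (char_inv HA \<psi>') \<phi>'
         \<or> conv HA \<phi> (char_inv HA \<psi>) = conv HA \<phi>' (char_inv HA \<psi>')"
  shows "Ssub HA \<phi> \<psi> = Ssub HA \<phi>' \<psi>' \<and> Iideal HA \<phi> \<psi> = Iideal HA \<phi>' \<psi>'"
proof -
  interpret gch HA by (rule gch.intro[OF assms(1)])
  have h': "conv HA (char_inv HA \<psi>') \<phi>' = conv HA (char_inv HA \<psi>) \<phi>
         \<or> conv HA \<phi>' (char_inv HA \<psi>') = conv HA \<phi> (char_inv HA \<psi>)"
    using assms(6) by auto
  show ?thesis
    using Ssub_eq[OF assms(2-6)] Iideal_dir[OF assms(2-6)] Iideal_dir[OF assms(3) assms(2) assms(5) assms(4) h']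
    by blast
qed


end
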